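(* Let $G$ be a strongly connected directed co-graph with co-tree $T$ and let $\hat{w}$ be an inner node of $T$. Then there is no vertex $w\in V(G)\setminus V(G_{\hat{w}})$ that resolves two vertices of $V(G_{\hat{w}})$ in $G$.
   Context: All graphs are finite and simple. For vertices $u,v$ of a directed graph $G$, $d_G(u,v)$ is the length of a shortest directed path from $u$ to $v$ (undefined if none exists); $G$ is strongly connected if directed paths exist in both directions between any two vertices. A vertex $w$ resolves two distinct vertices $u,v$ in $G$ if $w=u$, or $w=v$, or there are paths from $w$ to $u$ and from $w$ to $v$ with $d_G(w,u)\neq d_G(w,v)$. Directed co-graphs and their co-trees are defined recursively: a single vertex $u$ is a directed co-graph whose co-tree is a single node (a leaf) associated with $u$. If $G_1,G_2$ are directed co-graphs on disjoint vertex sets with co-trees $T_1,T_2$ (roots $\hat{l},\hat{r}$), then the disjoint union $G_1\cup G_2$ (edge set $E(G_1)\cup E(G_2)$), the join $G_1\times G_2$ (additionally all edges $(u,v),(v,u)$ with $u\in V(G_1),v\in V(G_2)$) and the directed join $G_1\gg G_2$ (additionally all edges $(u,v)$ with $u\in V(G_1),v\in V(G_2)$), each on vertex set $V(G_1)\cup V(G_2)$, are directed co-graphs; the co-tree is obtained from $T_1,T_2$ by adding a new root labelled $\cup$, $\times$ or $\gg$ respectively, with left successor $\hat{l}$ and right successor $\hat{r}$. Non-leaf nodes are inner nodes. For a node $\hat{w}$ of $T$, $G_{\hat{w}}$ denotes the subgraph of $G$ induced by the vertices associated with the leaves of the subtree of $T$ rooted at $\hat{w}$. *)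

theory Defs
  imports Main
begin

text \<open>Co-trees of directed co-graphs: leaves carry vertices, inner nodes are labelled
  by disjoint union, join, or directed join (left successor first).\<close>
datatype 'a cotree =
    Leaf 'a
  | CUnion "'a cotree" "'a cotree"
  | CJoin "'a cotree" "'a cotree"
  | CDJoin "'a cotree" "'a cotree"

fun leaves :: "'a cotree \<Rightarrow> 'a list" where
  "leaves (Leaf u) = [u]"
| "leaves (CUnion l r) = leaves l @ leaves r"
| "leaves (CJoin l r) = leaves l @ leaves r"
| "leaves (CDJoin l r) = leaves l @ leaves r"

definition verts :: "'a cotree \<Rightarrow> 'a set" where
  "verts T = set (leaves T)"

text \<open>Well-formed co-tree: the vertex sets combined at each node are disjoint.\<close>
definition wf_cotree :: "'a cotree \<Rightarrow> bool" where
  "wf_cotree T \<longleftrightarrow> distinct (leaves T)"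

fun edges :: "'a cotree \<Rightarrow> ('a \<times> 'a) set" where
  "edges (Leaf u) = {}"
| "edges (CUnion l r) = edges l \<union> edges r"
| "edges (CJoin l r) = edges l \<union> edges r \<union> (verts l \<times> verts r) \<union> (verts r \<times> verts l)"
| "edges (CDJoin l r) = edges l \<union> edges r \<union> (verts l \<times> verts r)"

fun subtrees :: "'a cotree \<Rightarrow> 'a cotree set" where
  "subtrees (Leaf u) = {Leaf u}"
| "subtrees (CUnion l r) = insert (CUnion l r) (subtrees l \<union> subtrees r)"
| "subtrees (CJoin l r) = insert (CJoin l r) (subtrees l \<union> subtrees r)"
| "subtrees (CDJoin l r) = insert (CDJoin l r) (subtrees l \<union> subtrees r)"

definition inner_node :: "'a cotree \<Rightarrow> bool" where
  "inner_node t \<longleftrightarrow> (\<forall>u. t \<noteq> Leaf u)"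

definition strongly_connected :: "'a set \<Rightarrow> ('a \<times> 'a) set \<Rightarrow> bool" where
  "strongly_connected V E \<longleftrightarrow> (\<forall>u\<in>V. \<forall>v\<in>V. (u, v) \<in> E\<^sup>*)"

definition dist :: "('a \<times> 'a) set \<Rightarrow> 'a \<Rightarrow> 'a \<Rightarrow> nat" where
  "dist E u v = (LEAST n. (u, v) \<in> E ^^ n)"

definition resolves :: "('a \<times> 'a) set \<Rightarrow> 'a \<Rightarrow> 'a \<Rightarrow> 'a \<Rightarrow> bool" where
  "resolves E w u v \<longleftrightarrow> w = u \<or> w = v \<or>
     ((w, u) \<in> E\<^sup>* \<and> (w, v) \<in> E\<^sup>* \<and> dist E w u \<noteq> dist E w v)"

end

theory Submission
  imports Defs
begin

lemma edges_sub: "edges t \<subseteq> verts t \<times> verts t"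
  by (induction t) (auto simp: verts_def)

lemma module_edge:
  assumes "wf_cotree T" "wt \<in> subtrees T" "x \<notin> verts wt" "y \<in> verts wt"
    "y' \<in> verts wt" "(x, y) \<in> edges T"
  shows "(x, y') \<in> edges T"
  using assms
proof (induction T)
  case (Leaf u)
  then show ?case by simp
next
  case (CUnion l r)
  have d: "wf_cotree l" "wf_cotree r" "verts l \<inter> verts r = {}"
    using CUnion.prems(1) by (auto simp: wf_cotree_def verts_def)
  have sl: "verts wt \<subseteq> verts l" if "wt \<in> subtrees l" for l :: "'a cotree"
    using that by (induction l) (auto simp: verts_def)
  show ?case
  proof (cases "wt = CUnion l r")
    case True
    then show ?thesis using CUnion.prems edges_sub[of "CUnion l r"] by blast
  next
    case False
    hence "wt \<in> subtrees l \<or> wt \<in> subtrees r" using CUnion.prems by auto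
    then show ?thesis
    proof
      assume w: "wt \<in> subtrees l"
      have "(x,y) \<in> edges l"
        using CUnion.prems sl[OF w] d edges_sub[of r] by auto
      then show ?thesis using CUnion.IH(1)[OF d(1) w] CUnion.prems by auto
    next
      assume w: "wt \<in> subtrees r"
      have "(x,y) \<in> edges r"
        using CUnion.prems sl[OF w] d edges_sub[of l] by auto
      then show ?thesis using CUnion.IH(2)[OF d(2) w] CUnion.prems by auto
    qed
  qed
next
  case (CJoin l r)
  have d: "wf_cotree l" "wf_cotree r" "verts l \<inter> verts r = {}"
    using CJoin.prems(1) by (auto simp: wf_cotree_def verts_def)
  have sl: "verts wt \<subseteq> verts l" if "wt \<in> subtrees l" for l :: "'a cotree"
    using that by (induction l) (auto simp: verts_def)
  show ?case
  proof (cases "wt = CJoin l r")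
    case True
    then show ?thesis using CJoin.prems edges_sub[of "CJoin l r"] by blast
  next
    case False
    hence "wt \<in> subtrees l \<or> wt \<in> subtrees r" using CJoin.prems by auto
    then show ?thesis
    proof
      assume w: "wt \<in> subtrees l"
      have "(x,y) \<in> edges l \<or> x \<in> verts r"
        using CJoin.prems sl[OF w] d edges_sub[of r] by auto
      then show ?thesis using CJoin.IH(1)[OF d(1) w] CJoin.prems sl[OF w] by auto
    next
      assume w: "wt \<in> subtrees r"
      have "(x,y) \<in> edges r \<or> x \<in> verts l"
        using CJoin.prems sl[OF w] d edges_sub[of l] by auto
      then show ?thesis using CJoin.IH(2)[OF d(2) w] CJoin.prems sl[OF w] by auto
    qed
  qed
next
  case (CDJoin l r)
  have d: "wf_cotree l" "wf_cotree r" "verts l \<inter> verts r = {}"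
    using CDJoin.prems(1) by (auto simp: wf_cotree_def verts_def)
  have sl: "verts wt \<subseteq> verts l" if "wt \<in> subtrees l" for l :: "'a cotree"
    using that by (induction l) (auto simp: verts_def)
  show ?case
  proof (cases "wt = CDJoin l r")
    case True
    then show ?thesis using CDJoin.prems edges_sub[of "CDJoin l r"] by blast
  next
    case False
    hence "wt \<in> subtrees l \<or> wt \<in> subtrees r" using CDJoin.prems by auto
    then show ?thesis
    proof
      assume w: "wt \<in> subtrees l"
      have "(x,y) \<in> edges l"
        using CDJoin.prems sl[OF w] d edges_sub[of r] by auto
      then show ?thesis using CDJoin.IH(1)[OF d(1) w] CDJoin.prems by auto
    next
      assume w: "wt \<in> subtrees r"
      have "(x,y) \<in> edges r \<or> x \<in> verts l"
        using CDJoin.prems sl[OF w] d edges_sub[of l] by auto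
      then show ?thesis using CDJoin.IH(2)[OF d(2) w] CDJoin.prems sl[OF w] by auto
    qed
  qed
qed

lemma module_path:
  assumes mod: "\<And>x y y'. x \<notin> M \<Longrightarrow> y \<in> M \<Longrightarrow> y' \<in> M \<Longrightarrow> (x,y) \<in> E \<Longrightarrow> (x,y') \<in> E"
  shows "(w,u) \<in> E ^^ n \<Longrightarrow> w \<notin> M \<Longrightarrow> u \<in> M \<Longrightarrow> v \<in> M \<Longrightarrow> \<exists>m\<le>n. (w,v) \<in> E ^^ m"
proof (induction n arbitrary: w)
  case 0
  then show ?case by auto
next
  case (Suc n)
  then obtain y where y: "(w,y) \<in> E" "(y,u) \<in> E ^^ n" by (meson relpow_Suc_D2)
  show ?case
  proof (cases "y \<in> M")
    case True
    have "(w,v) \<in> E" by (rule mod[OF Suc.prems(2) True Suc.prems(4) y(1)])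
    hence "(w,v) \<in> E ^^ 1" by simp
    then show ?thesis by (intro exI[of _ 1]) simp
  next
    case False
    then obtain m where "m \<le> n" "(y,v) \<in> E ^^ m" using Suc.IH[OF y(2) False Suc.prems(3,4)] by blast
    hence "(w,v) \<in> E ^^ Suc m" using y(1) by (meson relpow_Suc_I2)
    then show ?thesis using \<open>m \<le> n\<close> by (intro exI[of _ "Suc m"]) simp
  qed
qed

lemma module_dist_le:
  assumes mod: "\<And>x y y'. x \<notin> M \<Longrightarrow> y \<in> M \<Longrightarrow> y' \<in> M \<Longrightarrow> (x,y) \<in> E \<Longrightarrow> (x,y') \<in> E"
    and "(w,u) \<in> E\<^sup>*" "w \<notin> M" "u \<in> M" "v \<in> M"
  shows "dist E w v \<le> dist E w u"
proof -
  obtain n where n: "(w,u) \<in> E ^^ n" using assms(2) rtrancl_power by blast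
  have l: "(w,u) \<in> E ^^ dist E w u" unfolding dist_def using n by (rule LeastI)
  have "\<exists>m\<le>dist E w u. (w,v) \<in> E ^^ m"
    apply (rule module_path[where M=M])
    apply (erule (3) mod)
    using l assms(3-5) by auto
  then obtain m where "m \<le> dist E w u" "(w,v) \<in> E ^^ m" by blast
  then show ?thesis unfolding dist_def by (meson Least_le le_trans)
qed

theorem lemma1:
  fixes T :: "'a cotree" and wt :: "'a cotree"
  assumes "wf_cotree T"
    and "strongly_connected (verts T) (edges T)"
    and "wt \<in> subtrees T"
    and "inner_node wt"
  shows "\<not> (\<exists>w \<in> verts T - verts wt. \<exists>u \<in> verts wt. \<exists>v \<in> verts wt.
             u \<noteq> v \<and> resolves (edges T) w u v)"
proof
  assume "\<exists>w \<in> verts T - verts wt. \<exists>u \<in> verts wt. \<exists>v \<in> verts wt.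
             u \<noteq> v \<and> resolves (edges T) w u v"
  then obtain w u v where w: "w \<notin> verts wt" and uv: "u \<in> verts wt" "v \<in> verts wt"
    and r: "resolves (edges T) w u v" by blast
  have mod: "\<And>x y y'. x \<notin> verts wt \<Longrightarrow> y \<in> verts wt \<Longrightarrow> y' \<in> verts wt \<Longrightarrow> (x,y) \<in> edges T \<Longrightarrow> (x,y') \<in> edges T"
    by (rule module_edge[OF assms(1,3)])
  from r w uv have "(w,u) \<in> (edges T)\<^sup>*" "(w,v) \<in> (edges T)\<^sup>*" "dist (edges T) w u \<noteq> dist (edges T) w v"
    unfolding resolves_def by auto
  moreover have "dist (edges T) w v \<le> dist (edges T) w u"
    by (rule module_dist_le[OF mod calculation(1) w uv])
  moreover have "dist (edges T) w u \<le> dist (edges T) w v"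
    by (rule module_dist_le[OF mod calculation(2) w uv(2,1)])
  ultimately show False by simp
qed

end
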